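(* Let $R$ be a $*$-ring. Then the following are equivalent: (1) $R$ is strongly $J$-$*$-clean. (2) $R$ is uniquely clean and $a-a^*\in J(R)$ for every $a\in R$. (3) $R$ is uniquely clean and $a+a^*\in J(R)$ for every $a\in R$.
   Context: All rings are associative with identity. A $*$-ring is a ring $R$ with an involution $*$, i.e. a map $a\mapsto a^*$ with $(a+b)^*=a^*+b^*$, $(ab)^*=b^*a^*$, $(a^* )^*=a$. $J(R)$ denotes the Jacobson radical of $R$. A projection is an element $e$ with $e^2=e=e^*$. $R$ is strongly $J$-$*$-clean if every $a\in R$ can be written $a=e+u$ with $e$ a projection, $u\in J(R)$ and $ae=ea$. $R$ is uniquely clean if every element of $R$ can be written uniquely as the sum of an idempotent and a unit. *)

theory Defs
  imports Main
begin

definition is_involution :: "('a::ring_1 \<Rightarrow> 'a) \<Rightarrow> bool" where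
  "is_involution st \<longleftrightarrow>
     (\<forall>a b. st (a + b) = st a + st b) \<and>
     (\<forall>a b. st (a * b) = st b * st a) \<and>
     (\<forall>a. st (st a) = a)"

definition left_ideal :: "'a::ring_1 set \<Rightarrow> bool" where
  "left_ideal I \<longleftrightarrow> 0 \<in> I \<and> (\<forall>x\<in>I. \<forall>y\<in>I. x + y \<in> I) \<and> (\<forall>x\<in>I. - x \<in> I)
     \<and> (\<forall>r. \<forall>x\<in>I. r * x \<in> I)"

definition maximal_left_ideal :: "'a::ring_1 set \<Rightarrow> bool" where
  "maximal_left_ideal M \<longleftrightarrow> left_ideal M \<and> M \<noteq> UNIV \<and>
     (\<forall>I. left_ideal I \<and> M \<subseteq> I \<longrightarrow> I = M \<or> I = UNIV)"

definition jacobson :: "'a::ring_1 set" where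
  "jacobson = \<Inter> {M. maximal_left_ideal M}"

definition is_unit_r :: "'a::ring_1 \<Rightarrow> bool" where
  "is_unit_r u \<longleftrightarrow> (\<exists>v. u * v = 1 \<and> v * u = 1)"

definition idem :: "'a::ring_1 \<Rightarrow> bool" where
  "idem e \<longleftrightarrow> e * e = e"

definition projection :: "('a::ring_1 \<Rightarrow> 'a) \<Rightarrow> 'a \<Rightarrow> bool" where
  "projection st e \<longleftrightarrow> e * e = e \<and> st e = e"

definition strongly_J_star_clean :: "('a::ring_1 \<Rightarrow> 'a) \<Rightarrow> bool" where
  "strongly_J_star_clean st \<longleftrightarrow>
     (\<forall>a. \<exists>e u. projection st e \<and> u \<in> jacobson \<and> a = e + u \<and> a * e = e * a)"

definition uniquely_clean :: "'a::ring_1 itself \<Rightarrow> bool" where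
  "uniquely_clean _ \<longleftrightarrow>
     (\<forall>a::'a. \<exists>!p. idem (fst p) \<and> is_unit_r (snd p) \<and> a = fst p + snd p)"

end

theory Submission
  imports Defs
begin

lemma li_one: "left_ideal (I::'a::ring_1 set) \<Longrightarrow> 1 \<in> I \<Longrightarrow> I = UNIV"
  unfolding left_ideal_def by (metis UNIV_eq_I mult.right_neutral)

lemma jac_li: "left_ideal (jacobson :: 'a::ring_1 set)"
  unfolding left_ideal_def jacobson_def maximal_left_ideal_def by auto

lemma jac_0: "(0::'a::ring_1) \<in> jacobson" using jac_li unfolding left_ideal_def by blast
lemma jac_add: "x \<in> jacobson \<Longrightarrow> y \<in> jacobson \<Longrightarrow> (x + y::'a::ring_1) \<in> jacobson"
  using jac_li unfolding left_ideal_def by blast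
lemma jac_neg: "x \<in> jacobson \<Longrightarrow> (- x::'a::ring_1) \<in> jacobson"
  using jac_li unfolding left_ideal_def by blast
lemma jac_lmult: "x \<in> jacobson \<Longrightarrow> (r * x::'a::ring_1) \<in> jacobson"
  using jac_li unfolding left_ideal_def by blast
lemma jac_diff: "x \<in> jacobson \<Longrightarrow> y \<in> jacobson \<Longrightarrow> (x - y::'a::ring_1) \<in> jacobson"
  by (metis jac_add jac_neg diff_conv_add_uminus)
lemma jac_sub: "maximal_left_ideal M \<Longrightarrow> x \<in> jacobson \<Longrightarrow> (x::'a::ring_1) \<in> M"
  unfolding jacobson_def by blast

lemma li_0: "left_ideal I \<Longrightarrow> 0 \<in> I" unfolding left_ideal_def by blast
lemma li_add: "left_ideal I \<Longrightarrow> x \<in> I \<Longrightarrow> y \<in> I \<Longrightarrow> x + y \<in> I" unfolding left_ideal_def by blast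
lemma li_neg: "left_ideal I \<Longrightarrow> x \<in> I \<Longrightarrow> - x \<in> I" unfolding left_ideal_def by blast
lemma li_mult: "left_ideal I \<Longrightarrow> x \<in> I \<Longrightarrow> r * x \<in> I" unfolding left_ideal_def by blast
lemma max_li: "maximal_left_ideal M \<Longrightarrow> left_ideal M" unfolding maximal_left_ideal_def by blast
lemma max_1: "maximal_left_ideal (M::'a::ring_1 set) \<Longrightarrow> 1 \<notin> M"
  unfolding maximal_left_ideal_def using li_one by blast

lemma exists_max:
  fixes I :: "'a::ring_1 set"
  assumes "left_ideal I" "1 \<notin> I"
  shows "\<exists>M. maximal_left_ideal M \<and> I \<subseteq> M"
proof -
  let ?A = "{K. left_ideal K \<and> I \<subseteq> K \<and> (1::'a) \<notin> K}"
  have "\<exists>M\<in>?A. \<forall>X\<in>?A. M \<subseteq> X \<longrightarrow> X = M"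
  proof (rule subset_Zorn_nonempty)
    show "?A \<noteq> {}" using assms by auto
    fix C assume C: "C \<noteq> {}" "subset.chain ?A C"
    have sub: "C \<subseteq> ?A" and ch: "\<forall>X\<in>C. \<forall>Y\<in>C. X \<subseteq> Y \<or> Y \<subseteq> X"
      using C(2) by (auto simp: subset_chain_def)
    have "left_ideal (\<Union>C)"
      unfolding left_ideal_def
    proof (intro conjI ballI allI)
      show "0 \<in> \<Union>C" using C(1) sub unfolding left_ideal_def by blast
    next
      fix x y assume "x \<in> \<Union>C" "y \<in> \<Union>C"
      then obtain X Y where XY: "X \<in> C" "Y \<in> C" "x \<in> X" "y \<in> Y" by blast
      show "x + y \<in> \<Union>C"
      proof (cases "X \<subseteq> Y")
        case True
        then have "x + y \<in> Y" using XY sub unfolding left_ideal_def by blast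
        then show ?thesis using XY by blast
      next
        case False
        then have "Y \<subseteq> X" using ch XY by blast
        then have "x + y \<in> X" using XY sub unfolding left_ideal_def by blast
        then show ?thesis using XY by blast
      qed
    next
      fix x assume "x \<in> \<Union>C"
      then show "- x \<in> \<Union>C" using sub unfolding left_ideal_def by blast
    next
      fix r x assume "x \<in> \<Union>C"
      then show "r * x \<in> \<Union>C" using sub unfolding left_ideal_def by blast
    qed
    moreover have "I \<subseteq> \<Union>C" using C(1) sub by blast
    moreover have "1 \<notin> \<Union>C" using sub by blast
    ultimately show "\<Union>C \<in> ?A" by blast
  qed
  then obtain M where M: "M \<in> ?A" "\<forall>X\<in>?A. M \<subseteq> X \<longrightarrow> X = M" by blast
  have "maximal_left_ideal M"
    unfolding maximal_left_ideal_def
  proof (intro conjI allI impI)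
    show "left_ideal M" using M by blast
    show "M \<noteq> UNIV" using M by blast
    fix K assume K: "left_ideal K \<and> M \<subseteq> K"
    show "K = M \<or> K = UNIV"
    proof (cases "1 \<in> K")
      case True then show ?thesis using li_one K by blast
    next
      case False then have "K \<in> ?A" using K M by blast
      then show ?thesis using M K by blast
    qed
  qed
  then show ?thesis using M by blast
qed

lemma jac_linv: assumes "x \<in> jacobson" shows "\<exists>v. v * (1 + x) = (1::'a::ring_1)"
proof (rule ccontr)
  assume nv: "\<not> ?thesis"
  let ?I = "{r * (1 + x) | r. True}"
  have li: "left_ideal ?I"
    unfolding left_ideal_def
  proof (intro conjI ballI allI)
    have "0 = 0 * (1 + x)" by simp
    then show "0 \<in> ?I" by blast
  next
    fix a b assume "a \<in> ?I" "b \<in> ?I"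
    then obtain r1 r2 where "a = r1 * (1 + x)" "b = r2 * (1 + x)" by blast
    then have "a + b = (r1 + r2) * (1 + x)" by (simp only: distrib_right)
    then show "a + b \<in> ?I" by blast
  next
    fix a assume "a \<in> ?I"
    then obtain r1 where "a = r1 * (1 + x)" by blast
    then have "- a = (- r1) * (1 + x)" by simp
    then show "- a \<in> ?I" by blast
  next
    fix s a assume "a \<in> ?I"
    then obtain r1 where "a = r1 * (1 + x)" by blast
    then have "s * a = (s * r1) * (1 + x)" by (simp only: mult.assoc)
    then show "s * a \<in> ?I" by blast
  qed
  have "1 \<notin> ?I" using nv by auto
  then obtain M where M: "maximal_left_ideal M" "?I \<subseteq> M" using exists_max li by blast
  have "1 + x \<in> ?I" by (metis (mono_tags, lifting) mem_Collect_eq mult_1)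
  then have M1: "1 + x \<in> M" using M(2) by blast
  have "x \<in> M" using jac_sub M(1) assms by blast
  then have "1 + x + (- x) \<in> M" using M1 M(1) max_li li_add li_neg by blast
  then have "1 \<in> M" by simp
  then show False using M(1) max_1 by blast
qed

lemma jac_unit: assumes "x \<in> jacobson" shows "is_unit_r (1 + (x::'a::ring_1))"
proof -
  obtain v where v: "v * (1 + x) = 1" using jac_linv assms by blast
  have "v = 1 + (- (v * x))" using v by (simp add: algebra_simps)
  moreover have "- (v * x) \<in> jacobson" using assms jac_lmult jac_neg by blast
  ultimately obtain w where w: "w * v = 1" using jac_linv by metis
  have "w = w * (v * (1 + x))" using v by simp
  also have "\<dots> = 1 + x" using w by (simp add: mult.assoc[symmetric])
  finally have "(1 + x) * v = 1" using w by simp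
  then show ?thesis unfolding is_unit_r_def using v by blast
qed

lemma jac_intro:
  assumes "\<And>r. \<exists>s. s * (1 - r * x) = (1::'a::ring_1)"
  shows "x \<in> jacobson"
proof (rule ccontr)
  assume "x \<notin> jacobson"
  then obtain M where M: "maximal_left_ideal M" "x \<notin> M" unfolding jacobson_def by blast
  let ?K = "{m + r * x | m r. m \<in> M}"
  have liM: "left_ideal M" using M max_li by blast
  have li: "left_ideal ?K"
    unfolding left_ideal_def
  proof (intro conjI ballI allI)
    have "0 = 0 + 0 * x" "0 \<in> M" using liM li_0 by auto
    then show "0 \<in> ?K" by blast
  next
    fix a b assume "a \<in> ?K" "b \<in> ?K"
    then obtain m1 r1 m2 r2 where "a = m1 + r1 * x" "b = m2 + r2 * x" "m1 \<in> M" "m2 \<in> M" by blast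
    then have "a + b = (m1 + m2) + (r1 + r2) * x" "m1 + m2 \<in> M"
      using liM li_add by (auto simp: algebra_simps)
    then show "a + b \<in> ?K" by blast
  next
    fix a assume "a \<in> ?K"
    then obtain m1 r1 where "a = m1 + r1 * x" "m1 \<in> M" by blast
    then have "- a = (- m1) + (- r1) * x" "- m1 \<in> M"
      using liM li_neg by (auto simp: algebra_simps)
    then show "- a \<in> ?K" by blast
  next
    fix s a assume "a \<in> ?K"
    then obtain m1 r1 where "a = m1 + r1 * x" "m1 \<in> M" by blast
    then have "s * a = (s * m1) + (s * r1) * x" "s * m1 \<in> M"
      using liM li_mult by (auto simp: algebra_simps)
    then show "s * a \<in> ?K" by blast
  qed
  have "M \<subseteq> ?K"
  proof
    fix m assume "m \<in> M"
    moreover have "m = m + 0 * x" by simp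
    ultimately show "m \<in> ?K" by blast
  qed
  moreover have "x \<in> ?K"
  proof -
    have "x = 0 + 1 * x" by simp
    then show ?thesis using liM li_0 by blast
  qed
  ultimately have "?K = UNIV" using M(1) li M(2) unfolding maximal_left_ideal_def by blast
  then have "1 \<in> ?K" by blast
  then obtain m r where mr: "1 = m + r * x" "m \<in> M" by blast
  obtain s where s: "s * (1 - r * x) = 1" using assms by blast
  have "1 - r * x = m" using mr by (simp add: algebra_simps)
  then have "s * m = 1" using s by simp
  then have "1 \<in> M" using mr liM li_mult by metis
  then show False using M(1) max_1 by blast
qed


lemma jac_rmult: assumes "x \<in> jacobson" shows "x * s \<in> (jacobson::'a::ring_1 set)"
proof (rule jac_intro)
  fix r
  have "- (s * (r * x)) \<in> jacobson" using assms jac_lmult jac_neg by blast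
  then obtain c where c: "c * (1 + - (s * (r * x))) = 1" using jac_unit unfolding is_unit_r_def by blast
  have "(1 + r * x * c * s) * (1 - r * (x * s)) = 1 - r * x * s + r * x * (c * (1 + - (s * (r * x)))) * s"
    by (simp add: algebra_simps)
  also have "\<dots> = 1" using c by (simp add: mult.assoc)
  finally show "\<exists>t. t * (1 - r * (x * s)) = 1" by blast
qed

lemma inv_add: "is_involution st \<Longrightarrow> st (a + b) = st a + st b" unfolding is_involution_def by metis
lemma inv_mult: "is_involution st \<Longrightarrow> st (a * b) = st b * st a" unfolding is_involution_def by metis
lemma inv_inv: "is_involution st \<Longrightarrow> st (st a) = a" unfolding is_involution_def by metis
lemma inv_0: assumes "is_involution st" shows "st 0 = 0"
proof -
  have "st (0 + 0) = st 0 + st 0" by (rule inv_add[OF assms])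
  then show ?thesis by simp
qed
lemma inv_neg: assumes "is_involution st" shows "st (- a) = - st a"
proof -
  have "st (a + - a) = st a + st (- a)" by (rule inv_add[OF assms])
  then have "st a + st (- a) = 0" using inv_0[OF assms] by simp
  then show ?thesis by (metis minus_unique)
qed
lemma inv_diff: assumes "is_involution st" shows "st (a - b) = st a - st b"
  using inv_add[OF assms, of a "- b"] inv_neg[OF assms, of b] by (metis diff_conv_add_uminus)
lemma inv_1: assumes "is_involution st" shows "st 1 = (1::'a::ring_1)"
proof -
  have "st (1 * st 1) = st (st 1) * st 1" by (rule inv_mult[OF assms])
  then show ?thesis using inv_inv[OF assms] by simp
qed

lemma jac_star: assumes inv: "is_involution st" and x: "x \<in> jacobson" shows "st x \<in> (jacobson::'a::ring_1 set)"
proof (rule jac_intro)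
  fix r
  have "- (x * st r) \<in> jacobson" using x jac_rmult jac_neg by blast
  then obtain c where c: "(1 + - (x * st r)) * c = 1" using jac_unit unfolding is_unit_r_def by blast
  have "st ((1 + - (x * st r)) * c) = st 1" using c by simp
  then have "st c * (1 - r * st x) = 1"
    by (simp add: inv_diff[OF inv] inv_mult[OF inv] inv_add[OF inv] inv_neg[OF inv] inv_1[OF inv] inv_inv[OF inv])
  then show "\<exists>s. s * (1 - r * st x) = 1" by blast
qed

lemma unit_add_jac: assumes w: "is_unit_r w" and u: "u \<in> jacobson" shows "is_unit_r (w + (u::'a::ring_1))"
proof -
  obtain v where v: "w * v = 1" "v * w = 1" using w unfolding is_unit_r_def by blast
  have "v * u \<in> jacobson" using u jac_lmult by blast
  then obtain c where c: "c * (1 + v * u) = 1" "(1 + v * u) * c = 1" using jac_unit unfolding is_unit_r_def by blast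
  have e: "w + u = w * (1 + v * u)" by (simp add: distrib_left mult.assoc[symmetric] v)
  have "(w * (1 + v * u)) * (c * v) = w * ((1 + v * u) * c) * v" by (simp add: mult.assoc)
  also have "\<dots> = 1" using c v by simp
  finally have 1: "(w + u) * (c * v) = 1" using e by simp
  have "(c * v) * (w * (1 + v * u)) = c * (v * w) * (1 + v * u)" by (simp add: mult.assoc)
  also have "\<dots> = 1" using c v by simp
  finally have 2: "(c * v) * (w + u) = 1" using e by simp
  show ?thesis unfolding is_unit_r_def using 1 2 by blast
qed

lemma idem_unit: assumes "e * e = e" "is_unit_r e" shows "e = (1::'a::ring_1)"
proof -
  obtain v where v: "v * e = 1" using assms unfolding is_unit_r_def by blast
  have "e = (v * e) * e" using v by simp
  also have "\<dots> = v * e" using assms by (simp add: mult.assoc)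
  finally show ?thesis using v by simp
qed

lemma comm_idem_eq:
  fixes e f :: "'a::ring_1"
  assumes e: "e * e = e" and f: "f * f = f" and ef: "f * e = e * f" and d: "e - f \<in> jacobson"
  shows "e = f"
proof -
  have e2: "\<And>y. e * (e * y) = e * y" using e by (metis mult.assoc)
  have f2: "\<And>y. f * (f * y) = f * y" using f by (metis mult.assoc)
  have ef2: "\<And>y. f * (e * y) = e * (f * y)" using ef by (metis mult.assoc)
  let ?x = "e - f"
  have xx: "?x * ?x = e + f - e * f - e * f" by (simp add: algebra_simps e f ef)
  have xxx: "?x * ?x * ?x = ?x" unfolding xx by (simp add: algebra_simps e f ef e2 f2 ef2)
  have "?x * ?x \<in> jacobson" using d jac_lmult by blast
  then have "- (?x * ?x) \<in> jacobson" using jac_neg by blast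
  then obtain c where c: "(1 + - (?x * ?x)) * c = 1" using jac_unit unfolding is_unit_r_def by blast
  have "?x * (1 + - (?x * ?x)) = 0" using xxx by (simp add: algebra_simps)
  then have "?x = ?x * ((1 + - (?x * ?x)) * c)" using c by simp
  also have "\<dots> = 0" using \<open>?x * (1 + - (?x * ?x)) = 0\<close> by (simp add: mult.assoc[symmetric])
  finally show ?thesis by simp
qed


lemma idem_compl: "g * g = g \<Longrightarrow> (1 - g) * (1 - g) = (1 - g::'a::ring_1)"
  by (simp add: algebra_simps)

lemma sq_unit: "(e::'a::ring_1) * e = e \<Longrightarrow> (e + e - 1) * (e + e - 1) = 1"
  by (simp add: algebra_simps)

lemma uc_unique:
  assumes "uniquely_clean TYPE('a::ring_1)" "idem f1" "is_unit_r v1" "idem f2" "is_unit_r v2"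
    "f1 + v1 = (f2 + v2 :: 'a)"
  shows "f1 = f2"
proof -
  have "\<exists>!p. idem (fst p) \<and> is_unit_r (snd p) \<and> f1 + v1 = fst p + snd p"
    using assms(1) unfolding uniquely_clean_def by (rule spec)
  moreover have "idem (fst (f1, v1)) \<and> is_unit_r (snd (f1, v1)) \<and> f1 + v1 = fst (f1, v1) + snd (f1, v1)"
    using assms by simp
  moreover have "idem (fst (f2, v2)) \<and> is_unit_r (snd (f2, v2)) \<and> f1 + v1 = fst (f2, v2) + snd (f2, v2)"
    using assms by simp
  ultimately have "(f1, v1) = (f2, v2)" by blast
  then show ?thesis by simp
qed

lemma uc_exists:
  assumes "uniquely_clean TYPE('a::ring_1)"
  shows "\<exists>f v. idem f \<and> is_unit_r v \<and> (a::'a) = f + v"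
proof -
  have "\<exists>!p. idem (fst p) \<and> is_unit_r (snd p) \<and> a = fst p + snd p"
    using assms unfolding uniquely_clean_def by (rule spec)
  then show ?thesis by blast
qed

lemma uc_aux:
  fixes e n :: "'a::ring_1"
  assumes uc: "uniquely_clean TYPE('a)" and e: "e * e = e"
    and f: "(e + n) * (e + n) = e + n" and nn: "n * n = 0"
    and an: "(e + e - 1) * n + n * (e + e - 1) = 0"
  shows "n = 0"
proof -
  let ?w = "e + e - 1 + n"
  have ee: "(e + e - 1) * (e + e - 1) = 1" using sq_unit[OF e] .
  have "?w * ?w = (e + e - 1) * (e + e - 1) + ((e + e - 1) * n + n * (e + e - 1)) + n * n"
    by (simp add: algebra_simps)
  then have ww: "?w * ?w = 1" using ee nn an by simp
  have u1: "is_unit_r ?w" unfolding is_unit_r_def using ww by blast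
  have u2: "is_unit_r (e + e - 1)" unfolding is_unit_r_def using ee by blast
  have i1: "idem (1 - (e + n))" unfolding idem_def using idem_compl[OF f] .
  have i2: "idem (1 - e)" unfolding idem_def using idem_compl[OF e] .
  have "1 - (e + n) + ?w = 1 - e + (e + e - 1)" by (simp add: algebra_simps)
  then have "1 - (e + n) = 1 - e" using uc_unique[OF uc i1 u1 i2 u2] by blast
  then show ?thesis by simp
qed

lemma uc_half:
  fixes e x :: "'a::ring_1"
  assumes uc: "uniquely_clean TYPE('a)" and e: "e * e = e"
  shows "e * x * (1 - e) = 0"
proof (rule uc_aux[OF uc e])
  have e2: "\<And>y. e * (e * y) = e * y" using e by (metis mult.assoc)
  show "(e + e * x * (1 - e)) * (e + e * x * (1 - e)) = e + e * x * (1 - e)"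
    by (simp add: algebra_simps e e2)
  show "e * x * (1 - e) * (e * x * (1 - e)) = 0"
    by (simp add: algebra_simps e e2)
  show "(e + e - 1) * (e * x * (1 - e)) + e * x * (1 - e) * (e + e - 1) = 0"
    by (simp add: algebra_simps e e2)
qed

lemma half_central:
  fixes e :: "'a::ring_1"
  assumes h: "\<And>(g::'a) y. g * g = g \<Longrightarrow> g * y * (1 - g) = 0" and e: "e * e = e"
  shows "e * x = x * e"
proof -
  have 1: "e * x * (1 - e) = 0" using h e by blast
  have "(1 - e) * x * (1 - (1 - e)) = 0" using h idem_compl[OF e] by blast
  then have 2: "(1 - e) * x * e = 0" by simp
  have "e * x = e * x * e" using 1 by (simp add: algebra_simps e)
  moreover have "x * e = e * x * e" using 2 by (simp add: algebra_simps e)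
  ultimately show ?thesis by simp
qed

lemma uc_central:
  assumes uc: "uniquely_clean TYPE('a::ring_1)" and e: "(e::'a) * e = e"
  shows "e * x = x * e"
  using half_central[of e x] uc_half[OF uc] e by blast

lemma df:
  fixes a b :: "'a::ring_1"
  assumes cen: "\<And>(g::'a) y. g * g = g \<Longrightarrow> g * y = y * g" and ab: "a * b = 1"
  shows "b * a = 1"
proof -
  have "(b * a) * (b * a) = b * (a * b) * a" by (simp add: mult.assoc)
  then have g: "(b * a) * (b * a) = b * a" using ab by simp
  have "a * (b * a) = (b * a) * a" using cen[OF g, of a] by simp
  moreover have "a * (b * a) = a" using ab by (simp add: mult.assoc[symmetric])
  ultimately have a: "a = b * a * a" by simp
  have "a * b = b * a * a * b" using a by simp
  also have "\<dots> = b * a" using ab by (simp add: mult.assoc)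
  finally show ?thesis using ab by simp
qed


lemma uc_unit_one:
  fixes w :: "'a::ring_1"
  assumes uc: "uniquely_clean TYPE('a)" and w: "is_unit_r w"
  shows "w - 1 \<in> jacobson"
proof (rule jac_intro)
  fix r
  let ?x = "1 - r * (w - 1)"
  obtain e v where ev: "idem e" "is_unit_r v" "?x = e + v" using uc_exists[OF uc] by blast
  have e: "e * e = e" using ev(1) unfolding idem_def .
  have cen: "\<And>y. e * y = y * e" using uc_central[OF uc e] by blast
  have e2: "\<And>y. e * (e * y) = e * y" using e by (metis mult.assoc)
  obtain vi where vi: "vi * v = 1" "v * vi = 1" using ev(2) unfolding is_unit_r_def by blast
  obtain wi where wi: "w * wi = 1" "wi * w = 1" using w unfolding is_unit_r_def by blast
  have cw: "w * e = e * w" "wi * e = e * wi" "r * e = e * r" using cen by auto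
  have cw2: "\<And>y. w * (e * y) = e * (w * y)" "\<And>y. wi * (e * y) = e * (wi * y)"
    "\<And>y. r * (e * y) = e * (r * y)"
    using cw by (metis mult.assoc)+
  have vx: "v = ?x - e" using ev(3) by simp
  have ev2: "e * v = e * (r * (1 - w))"
    unfolding vx by (simp add: algebra_simps e e2)
  let ?y = "1 - e * w"
  let ?s = "vi * e * r + (1 - e)"
  have "?s * ?y = vi * (e * (r * (1 - w))) + (1 - e)"
    by (simp add: algebra_simps e e2 cw cw2)
  also have "\<dots> = vi * (v * e) + (1 - e)" using ev2 cen by simp
  also have "\<dots> = 1" using vi by (simp add: mult.assoc[symmetric])
  finally have sy: "?s * ?y = 1" .
  have ys: "?y * ?s = 1" using df[OF _ sy] uc_central[OF uc] by blast
  have uy: "is_unit_r ?y" unfolding is_unit_r_def using sy ys by blast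
  let ?z = "(1 - e) - e * w"
  let ?z' = "(1 - e) - e * wi"
  have "?z * ?z' = (1 - e) + e * (w * wi)" by (simp add: algebra_simps e e2 cw cw2)
  then have zz1: "?z * ?z' = 1" using wi by simp
  have "?z' * ?z = (1 - e) + e * (wi * w)" by (simp add: algebra_simps e e2 cw cw2)
  then have zz2: "?z' * ?z = 1" using wi by simp
  have uz: "is_unit_r ?z" unfolding is_unit_r_def using zz1 zz2 by blast
  have i0: "idem (0::'a)" unfolding idem_def by simp
  have "0 + ?y = e + ?z" by (simp add: algebra_simps)
  then have "0 = e" using uc_unique[OF uc i0 uy ev(1) uz] by blast
  then have "?x = v" using ev(3) by simp
  then show "\<exists>s. s * (1 - r * (w - 1)) = 1" using vi by metis
qed

lemma uc_two: assumes uc: "uniquely_clean TYPE('a::ring_1)" shows "(1 + 1 :: 'a) \<in> jacobson"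
proof -
  have "is_unit_r (- 1 :: 'a)" unfolding is_unit_r_def by (rule exI[of _ "- 1"]) simp
  then have "(- 1 :: 'a) - 1 \<in> jacobson" using uc_unit_one[OF uc] by blast
  then have "- ((- 1 :: 'a) - 1) \<in> jacobson" by (rule jac_neg)
  then show ?thesis by simp
qed

lemma sj_idem_proj:
  fixes f :: "'a::ring_1"
  assumes inv: "is_involution st" and sj: "strongly_J_star_clean st" and f: "f * f = f"
  shows "st f = f"
proof -
  obtain e u where eu: "projection st e" "u \<in> jacobson" "f = e + u" "f * e = e * f"
    using sj unfolding strongly_J_star_clean_def by blast
  have e: "e * e = e" "st e = e" using eu(1) unfolding projection_def by auto
  have "f - e \<in> jacobson" using eu by simp
  then have "f = e" using comm_idem_eq[OF f e(1) eu(4)[symmetric]] by blast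
  then show ?thesis using e by simp
qed

lemma sj_central:
  fixes e :: "'a::ring_1" and st :: "'a \<Rightarrow> 'a"
  assumes inv: "is_involution st" and sj: "strongly_J_star_clean st" and e: "e * e = e"
  shows "e * x = x * e"
proof (rule half_central[OF _ e])
  fix g y :: 'a assume g: "g * g = g"
  have g2: "\<And>z. g * (g * z) = g * z" using g by (metis mult.assoc)
  let ?n = "g * y * (1 - g)"
  have "(g + ?n) * (g + ?n) = g + ?n" by (simp add: algebra_simps g g2)
  then have "st (g + ?n) = g + ?n" using sj_idem_proj[OF inv sj] by blast
  moreover have "st (g + ?n) = g + (1 - g) * (st y * g)"
    using sj_idem_proj[OF inv sj g]
    by (simp add: inv_add[OF inv] inv_mult[OF inv] inv_diff[OF inv] inv_1[OF inv])
  ultimately have "?n = (1 - g) * (st y * g)" by simp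
  then have "g * ?n = g * ((1 - g) * (st y * g))" by simp
  moreover have "g * ?n = ?n" by (simp add: algebra_simps g g2)
  moreover have "g * ((1 - g) * (st y * g)) = 0" by (simp add: algebra_simps g g2)
  ultimately show "?n = 0" by simp
qed

lemma sj_to:
  fixes st :: "'a::ring_1 \<Rightarrow> 'a"
  assumes inv: "is_involution st" and sj: "strongly_J_star_clean st"
  shows "uniquely_clean TYPE('a) \<and> (\<forall>a. a - st a \<in> jacobson)"
proof -
  have dec: "\<And>a. \<exists>e u. projection st e \<and> u \<in> jacobson \<and> a = e + u \<and> a * e = e * a"
    using sj unfolding strongly_J_star_clean_def by blast
  have u1: "\<And>v::'a. is_unit_r v \<Longrightarrow> v - 1 \<in> jacobson"
  proof -
    fix v :: 'a assume v: "is_unit_r v"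
    obtain e u where eu: "projection st e" "u \<in> jacobson" "v = e + u" using dec by blast
    have "is_unit_r (v + - u)" using unit_add_jac[OF v] jac_neg[OF eu(2)] by blast
    moreover have "v + - u = e" using eu by simp
    ultimately have "e = 1" using idem_unit eu(1) unfolding projection_def by metis
    then show "v - 1 \<in> jacobson" using eu by simp
  qed
  have uc: "uniquely_clean TYPE('a)"
    unfolding uniquely_clean_def
  proof
    fix a :: 'a
    show "\<exists>!p. idem (fst p) \<and> is_unit_r (snd p) \<and> a = fst p + snd p"
    proof (rule ex_ex1I)
      obtain e u where eu: "projection st e" "u \<in> jacobson" "a = e + u" using dec by blast
      have e: "e * e = e" using eu(1) unfolding projection_def by blast
      have "is_unit_r (e + e - 1)" unfolding is_unit_r_def using sq_unit[OF e] by blast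
      then have "is_unit_r ((e + e - 1) + u)" using unit_add_jac eu(2) by blast
      moreover have "idem (1 - e)" unfolding idem_def using idem_compl[OF e] .
      moreover have "a = (1 - e) + ((e + e - 1) + u)" using eu(3) by (simp add: algebra_simps)
      ultimately show "\<exists>p. idem (fst p) \<and> is_unit_r (snd p) \<and> a = fst p + snd p"
        by (metis fst_conv snd_conv)
    next
      fix p q :: "'a \<times> 'a"
      assume p: "idem (fst p) \<and> is_unit_r (snd p) \<and> a = fst p + snd p"
        and q: "idem (fst q) \<and> is_unit_r (snd q) \<and> a = fst q + snd q"
      have f1: "fst p * fst p = fst p" "fst q * fst q = fst q" using p q unfolding idem_def by auto
      have "(snd q - 1) - (snd p - 1) \<in> jacobson" using u1 p q jac_diff by blast
      moreover have "(snd q - 1) - (snd p - 1) = fst p - fst q"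
        using p q by (metis add_diff_cancel_left' add_diff_eq diff_diff_eq2 diff_add_cancel)
      ultimately have "fst p - fst q \<in> jacobson" by simp
      moreover have "fst q * fst p = fst p * fst q" using sj_central[OF inv sj f1(1)] by simp
      ultimately have "fst p = fst q" using comm_idem_eq[OF f1] by blast
      moreover then have "snd p = snd q" using p q by simp
      ultimately show "p = q" by (simp add: prod_eq_iff)
    qed
  qed
  have "\<forall>a. a - st a \<in> jacobson"
  proof
    fix a :: 'a
    obtain e u where eu: "projection st e" "u \<in> jacobson" "a = e + u" using dec by blast
    have "st a = e + st u" using eu inv_add[OF inv] unfolding projection_def by simp
    then have "a - st a = u - st u" using eu by simp
    then show "a - st a \<in> jacobson" using jac_diff eu(2) jac_star[OF inv eu(2)] by simp
  qed
  then show ?thesis using uc by blast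
qed

lemma to_sj:
  fixes st :: "'a::ring_1 \<Rightarrow> 'a"
  assumes inv: "is_involution st" and uc: "uniquely_clean TYPE('a)"
    and h: "\<forall>a. a - st a \<in> jacobson"
  shows "strongly_J_star_clean st"
  unfolding strongly_J_star_clean_def
proof
  fix a :: 'a
  obtain g v where gv: "idem g" "is_unit_r v" "a = g + v" using uc_exists[OF uc] by blast
  have g: "g * g = g" using gv(1) unfolding idem_def .
  let ?e = "1 - g"
  have e: "?e * ?e = ?e" using idem_compl[OF g] .
  have se: "st ?e * st ?e = st ?e" using e inv_mult[OF inv, of ?e ?e] by simp
  have "?e - st ?e \<in> jacobson" using h by blast
  moreover have "st ?e * ?e = ?e * st ?e" using uc_central[OF uc se] by simp
  ultimately have pe: "?e = st ?e" using comm_idem_eq[OF e se] by blast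
  have "g * (1 + 1) \<in> jacobson" using uc_two[OF uc] jac_lmult by blast
  moreover have "v - 1 \<in> jacobson" using uc_unit_one[OF uc gv(2)] .
  ultimately have "g * (1 + 1) + (v - 1) \<in> jacobson" by (rule jac_add)
  moreover have "a = ?e + (g * (1 + 1) + (v - 1))" using gv(3) by (simp add: algebra_simps mult_2_right)
  moreover have "a * ?e = ?e * a" using uc_central[OF uc e] by simp
  moreover have "projection st ?e" unfolding projection_def using e pe by simp
  ultimately show "\<exists>e u. projection st e \<and> u \<in> jacobson \<and> a = e + u \<and> a * e = e * a" by blast
qed

theorem lemma3p1:
  fixes st :: "'a::ring_1 \<Rightarrow> 'a"
  assumes "is_involution st"
  shows "(strongly_J_star_clean st \<longleftrightarrow>
            uniquely_clean TYPE('a) \<and> (\<forall>a. a - st a \<in> jacobson))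
       \<and> (strongly_J_star_clean st \<longleftrightarrow>
            uniquely_clean TYPE('a) \<and> (\<forall>a. a + st a \<in> jacobson))"
proof -
  have A: "strongly_J_star_clean st \<longleftrightarrow> uniquely_clean TYPE('a) \<and> (\<forall>a. a - st a \<in> jacobson)"
    using sj_to[OF assms] to_sj[OF assms] by blast
  have B: "(\<forall>a. a - st a \<in> jacobson) \<longleftrightarrow> (\<forall>a. a + st a \<in> jacobson)" if uc: "uniquely_clean TYPE('a)"
  proof -
    have two: "\<And>b::'a. b * (1 + 1) \<in> jacobson" using uc_two[OF uc] jac_lmult by blast
    have p: "\<And>a::'a. a + st a = (a - st a) + st a * (1 + 1)" by (simp add: algebra_simps mult_2_right)
    have m: "\<And>a::'a. a - st a = (a + st a) - st a * (1 + 1)" by (simp add: algebra_simps mult_2_right)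
    show ?thesis using p m two jac_add jac_diff by metis
  qed
  show ?thesis using A B by blast
qed

end
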